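(* Let $(X_t)_{t\ge0}$ be the Ornstein--Uhlenbeck process $dX_t=-X_t\,dt+\sqrt2\,dB_t$ started from a norm-subgaussian random vector $X_0=X$ in $\mathbb{R}^d$. If $T_1\ge\log\frac{\|X\|_{\psi_2}}{\sqrt d}$, then $\|X_{T_1}\|_{\psi_2}\le3\sqrt d$.
   Context: For an $\mathbb{R}^d$-valued random variable $X$, $\|X\|_{\psi_2}:=\inf\{t>0:\mathbb{E}[e^{\|X\|^2/t^2}]\le2\}$ ($\|\cdot\|$ Euclidean norm); $X$ is norm-subgaussian if this is finite. *)

theory Defs
  imports "HOL-Probability.Probability"
begin

definition psi2_norm :: "'a measure \<Rightarrow> ('a \<Rightarrow> 'b::real_normed_vector) \<Rightarrow> real" where
  "psi2_norm M X = Inf {t::real. t > 0 \<and>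
      (\<integral>\<^sup>+ \<omega>. ennreal (exp ((norm (X \<omega>))\<^sup>2 / t\<^sup>2)) \<partial>M) \<le> 2}"

definition norm_subgaussian :: "'a measure \<Rightarrow> ('a \<Rightarrow> 'b::real_normed_vector) \<Rightarrow> bool" where
  "norm_subgaussian M X \<longleftrightarrow> (\<exists>t::real. t > 0 \<and>
      (\<integral>\<^sup>+ \<omega>. ennreal (exp ((norm (X \<omega>))\<^sup>2 / t\<^sup>2)) \<partial>M) \<le> 2)"

definition std_gaussian_vec :: "'a measure \<Rightarrow> ('a \<Rightarrow> real ^ 'd) \<Rightarrow> bool" where
  "std_gaussian_vec M Z \<longleftrightarrow>
     prob_space.indep_vars M (\<lambda>_. borel) (\<lambda>i \<omega>. Z \<omega> $ i) UNIV \<and>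
     (\<forall>i. distributed M lborel (\<lambda>\<omega>. Z \<omega> $ i) std_normal_density)"

text \<open>Time-T value of the Ornstein--Uhlenbeck process dX = -X dt + sqrt 2 dB started
  at X_0 = X (Mehler representation), driven by a standard Gaussian Z independent of X:
  X_T = e^{-T} X + sqrt(1 - e^{-2T}) Z.\<close>
definition ou_at :: "('a \<Rightarrow> real ^ 'd) \<Rightarrow> ('a \<Rightarrow> real ^ 'd) \<Rightarrow> real \<Rightarrow> 'a \<Rightarrow> real ^ 'd" where
  "ou_at X Z T \<omega> = exp (- T) *\<^sub>R X \<omega> + sqrt (1 - exp (- 2 * T)) *\<^sub>R Z \<omega>"

end

theory Submission
  imports Defs
begin


lemma one_normal: "(\<integral>\<^sup>+x. ennreal (normal_density 0 (sqrt 2) x) \<partial>lborel) = 1"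
proof -
  interpret prob_space "density lborel (\<lambda>x. ennreal (normal_density 0 (sqrt 2) x))"
    by (rule prob_space_normal_density) simp
  have "emeasure (density lborel (\<lambda>x. ennreal (normal_density 0 (sqrt 2) x))) UNIV = 1"
    using emeasure_space_1 by simp
  then show ?thesis by (simp add: emeasure_density)
qed

lemma gauss_mgf:
  assumes "distributed M lborel Y (\<lambda>x. ennreal (std_normal_density x))"
  shows "(\<integral>\<^sup>+\<omega>. ennreal (exp ((Y \<omega>)\<^sup>2 / 4)) \<partial>M) = ennreal (sqrt 2)"
proof -
  have "(\<integral>\<^sup>+\<omega>. ennreal (exp ((Y \<omega>)\<^sup>2 / 4)) \<partial>M)
      = (\<integral>\<^sup>+x. ennreal (std_normal_density x) * ennreal (exp (x\<^sup>2 / 4)) \<partial>lborel)"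
    by (rule distributed_nn_integral[OF assms, symmetric]) simp
  also have "\<dots> = (\<integral>\<^sup>+x. ennreal (sqrt 2) * ennreal (normal_density 0 (sqrt 2) x) \<partial>lborel)"
  proof (rule nn_integral_cong)
    fix x :: real
    have "std_normal_density x * exp (x\<^sup>2 / 4) = sqrt 2 * normal_density 0 (sqrt 2) x"
      unfolding normal_density_def
      apply (simp add: real_sqrt_mult flip: exp_add)
      apply (simp add: field_simps)
      done
    then show "ennreal (std_normal_density x) * ennreal (exp (x\<^sup>2 / 4)) = ennreal (sqrt 2) * ennreal (normal_density 0 (sqrt 2) x)"
      by (simp add: normal_density_nonneg flip: ennreal_mult)
  qed
  also have "\<dots> = ennreal (sqrt 2)"
    by (simp add: nn_integral_cmult one_normal)
  finally show ?thesis .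
qed

lemma pw_real:
  fixes a b s t sd nX nZ nY :: real
  assumes "0 \<le> a" "0 \<le> b" "b \<le> 1" "s > 0" "sd > 0" "a * s \<le> t / 3" "3 * sd \<le> t"
    "0 \<le> nX" "0 \<le> nZ" "0 \<le> nY" "nY \<le> a * nX + b * nZ"
  shows "nY\<^sup>2 / t\<^sup>2 \<le> (1/3) * (nX\<^sup>2 / s\<^sup>2) + (2/3) * (nZ\<^sup>2 / (4 * sd\<^sup>2))"
proof -
  define x where "x = nX / s"
  define y where "y = nZ / sd"
  have t0: "t > 0" using assms by linarith
  have x0: "x \<ge> 0" "y \<ge> 0" using assms by (auto simp: x_def y_def)
  have "a * nX = (a * s) * x" using assms by (simp add: x_def)
  also have "\<dots> \<le> (t/3) * x" using assms x0 by (intro mult_right_mono) auto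
  finally have 1: "a * nX \<le> (t/3) * x" .
  have "b * nZ \<le> nZ" using assms by (simp add: mult_left_le_one_le)
  also have "nZ = sd * y" using assms by (simp add: y_def)
  also have "\<dots> \<le> (t/3) * y" using assms x0 by (intro mult_right_mono) auto
  finally have 2: "b * nZ \<le> (t/3) * y" .
  have "nY / t \<le> (x + y) / 3" using 1 2 assms t0 by (simp add: field_simps)
  moreover have "0 \<le> nY / t" using assms t0 by simp
  ultimately have "(nY / t)\<^sup>2 \<le> ((x + y) / 3)\<^sup>2" by (rule power_mono)
  also have "\<dots> \<le> (1/3) * x\<^sup>2 + (2/3) * (y\<^sup>2 / 4)"
  proof -
    have "0 \<le> (2*x - y)\<^sup>2" by simp
    then show ?thesis by (simp add: power2_eq_square field_simps)
  qed
  finally show ?thesis using assms by (simp add: x_def y_def power_divide)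
qed

lemma exp_pw:
  fixes u v :: real
  shows "exp ((1/3) * u + (2/3) * v) \<le> (1/3) * exp u + (2/3) * exp v"
  using convex_onD[OF exp_convex, of "2/3" u v] by simp

lemma exp_sum_pw:
  fixes z :: "'d::finite \<Rightarrow> real"
  shows "exp ((\<Sum>i\<in>UNIV. (z i)\<^sup>2) / (4 * real CARD('d)))
     \<le> (1 / real CARD('d)) * (\<Sum>i\<in>UNIV. exp ((z i)\<^sup>2 / 4))"
proof -
  have c: "real CARD('d) > 0" by simp
  have "exp (\<Sum>i\<in>UNIV. (1 / real CARD('d)) *\<^sub>R ((z i)\<^sup>2 / 4))
     \<le> (\<Sum>i\<in>UNIV. (1 / real CARD('d)) * exp ((z i)\<^sup>2 / 4))"
    by (rule convex_on_sum[OF _ _ exp_convex]) (auto)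
  moreover have "(\<Sum>i\<in>UNIV. (1 / real CARD('d)) *\<^sub>R ((z i)\<^sup>2 / 4))
     = (\<Sum>i\<in>UNIV. (z i)\<^sup>2) / (4 * real CARD('d))"
    by (simp add: sum_divide_distrib[symmetric] sum_distrib_left[symmetric] field_simps)
  ultimately show ?thesis by (simp add: sum_distrib_left)
qed


theorem lemma11:
  fixes M :: "'a measure" and X Z :: "'a \<Rightarrow> real ^ 'd" and T1 :: real
  assumes "prob_space M"
    and "X \<in> borel_measurable M"
    and "norm_subgaussian M X"
    and "std_gaussian_vec M Z"
    and "prob_space.indep_var M borel X borel Z"
    and "T1 \<ge> 0"
    and "T1 \<ge> ln (psi2_norm M X / sqrt (real CARD('d)))"
  shows "psi2_norm M (ou_at X Z T1) \<le> 3 * sqrt (real CARD('d))"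
proof -
  define d where "d = real CARD('d)"
  define sd where "sd = sqrt d"
  have d0: "d > 0" by (simp add: d_def)
  have sd0: "sd > 0" using d0 by (simp add: sd_def)
  have sdd: "sd\<^sup>2 = d" using d0 by (simp add: sd_def)
  define SX where "SX = {t::real. t > 0 \<and>
      (\<integral>\<^sup>+ \<omega>. ennreal (exp ((norm (X \<omega>))\<^sup>2 / t\<^sup>2)) \<partial>M) \<le> 2}"
  define SY where "SY = {t::real. t > 0 \<and>
      (\<integral>\<^sup>+ \<omega>. ennreal (exp ((norm (ou_at X Z T1 \<omega>))\<^sup>2 / t\<^sup>2)) \<partial>M) \<le> 2}"
  define K where "K = Inf SX"
  have KX: "psi2_norm M X = K" by (simp add: K_def SX_def psi2_norm_def)
  have SXne: "SX \<noteq> {}" using assms(3) by (auto simp: SX_def norm_subgaussian_def)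
  have K0: "K \<ge> 0" unfolding K_def using SXne by (intro cInf_greatest) (auto simp: SX_def)
  define a where "a = exp (- T1)"
  define b where "b = sqrt (1 - exp (- 2 * T1))"
  have a0: "a > 0" by (simp add: a_def)
  have a1: "a \<le> 1" using assms(6) by (simp add: a_def)
  have b0: "0 \<le> b" "b \<le> 1" using assms(6) by (auto simp: b_def)
  have aK: "a * K \<le> sd"
  proof (cases "K \<le> sd")
    case True
    then show ?thesis using a1 K0 a0 by (meson dual_order.trans mult_left_le_one_le less_imp_le)
  next
    case False
    then have "K / sd > 1" using sd0 by simp
    then have "ln (K / sd) \<le> T1" using assms(7) KX by (simp add: sd_def d_def)
    moreover have "K / sd = exp (ln (K / sd))" using \<open>K / sd > 1\<close> by simp
    ultimately have "K / sd \<le> exp T1" by (metis exp_le_cancel_iff)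
    then have "K \<le> sd * exp T1" using sd0 by (simp add: field_simps)
    then show ?thesis by (simp add: a_def exp_minus field_simps)
  qed
  have Zi: "distributed M lborel (\<lambda>\<omega>. Z \<omega> $ i) (\<lambda>x. ennreal (std_normal_density x))" for i
    using assms(4) by (simp add: std_gaussian_vec_def)
  have Zim: "(\<lambda>\<omega>. Z \<omega> $ i) \<in> borel_measurable M" for i
    using distributed_measurable[OF Zi[of i]] by simp
  have main: "t \<in> SY" if t: "t > 3 * sd" for t
  proof -
    have t0: "t > 0" using t sd0 by linarith
    have "K < t / (3 * a)" using aK t a0 by (simp add: field_simps)
    then obtain s0 where s0: "s0 \<in> SX" "s0 < t / (3 * a)" using cInf_lessD[OF SXne] K_def by blast
    define s where "s = s0"
    have s_pos: "s > 0" using s0 by (simp add: SX_def s_def)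
    have as: "a * s \<le> t / 3" using s0 a0 by (simp add: s_def field_simps)
    have sX: "(\<integral>\<^sup>+ \<omega>. ennreal (exp ((norm (X \<omega>))\<^sup>2 / s\<^sup>2)) \<partial>M) \<le> 2"
      using s0 by (simp add: SX_def s_def)
    have pw: "ennreal (exp ((norm (ou_at X Z T1 \<omega>))\<^sup>2 / t\<^sup>2))
        \<le> ennreal (1/3) * ennreal (exp ((norm (X \<omega>))\<^sup>2 / s\<^sup>2))
          + ennreal (2/(3*d)) * (\<Sum>i\<in>UNIV. ennreal (exp ((Z \<omega> $ i)\<^sup>2 / 4)))" for \<omega>
    proof -
      have ny: "norm (ou_at X Z T1 \<omega>) \<le> a * norm (X \<omega>) + b * norm (Z \<omega>)"
        unfolding ou_at_def a_def b_def
        by (rule order_trans[OF norm_triangle_ineq]) (use assms(6) in simp)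
      have "(norm (ou_at X Z T1 \<omega>))\<^sup>2 / t\<^sup>2 \<le> (1/3) * ((norm (X \<omega>))\<^sup>2 / s\<^sup>2)
             + (2/3) * ((norm (Z \<omega>))\<^sup>2 / (4 * sd\<^sup>2))"
        by (rule pw_real[OF less_imp_le[OF a0] b0 s_pos sd0 as _ _ _ _ ny]) (use t in auto)
      also have "(norm (Z \<omega>))\<^sup>2 = (\<Sum>i\<in>UNIV. (Z \<omega> $ i)\<^sup>2)"
        unfolding power2_norm_eq_inner inner_vec_def by (simp add: power2_eq_square)
      finally have "exp ((norm (ou_at X Z T1 \<omega>))\<^sup>2 / t\<^sup>2) \<le>
          exp ((1/3) * ((norm (X \<omega>))\<^sup>2 / s\<^sup>2) + (2/3) * ((\<Sum>i\<in>UNIV. (Z \<omega> $ i)\<^sup>2) / (4 * d)))"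
        by (simp add: sdd)
      also have "\<dots> \<le> (1/3) * exp ((norm (X \<omega>))\<^sup>2 / s\<^sup>2)
          + (2/3) * exp ((\<Sum>i\<in>UNIV. (Z \<omega> $ i)\<^sup>2) / (4 * d))"
        by (rule exp_pw)
      also have "\<dots> \<le> (1/3) * exp ((norm (X \<omega>))\<^sup>2 / s\<^sup>2)
          + (2/3) * ((1 / d) * (\<Sum>i\<in>UNIV. exp ((Z \<omega> $ i)\<^sup>2 / 4)))"
        using exp_sum_pw[of "\<lambda>i. Z \<omega> $ i"] by (simp add: d_def)
      also have "\<dots> = (1/3) * exp ((norm (X \<omega>))\<^sup>2 / s\<^sup>2)
          + (2/(3*d)) * (\<Sum>i\<in>UNIV. exp ((Z \<omega> $ i)\<^sup>2 / 4))"
        by simp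
      finally have r: "exp ((norm (ou_at X Z T1 \<omega>))\<^sup>2 / t\<^sup>2) \<le> \<dots>" .
      have "ennreal (exp ((norm (ou_at X Z T1 \<omega>))\<^sup>2 / t\<^sup>2)) \<le> ennreal ((1/3) * exp ((norm (X \<omega>))\<^sup>2 / s\<^sup>2)
          + (2/(3*d)) * (\<Sum>i\<in>UNIV. exp ((Z \<omega> $ i)\<^sup>2 / 4)))"
        using r by (rule ennreal_leI)
      also have "\<dots> = ennreal (1/3) * ennreal (exp ((norm (X \<omega>))\<^sup>2 / s\<^sup>2))
          + ennreal (2/(3*d)) * (\<Sum>i\<in>UNIV. ennreal (exp ((Z \<omega> $ i)\<^sup>2 / 4)))"
        using d0 by (simp add: sum_nonneg flip: ennreal_plus ennreal_mult)
      finally show ?thesis .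
    qed
    have "(\<integral>\<^sup>+ \<omega>. ennreal (exp ((norm (ou_at X Z T1 \<omega>))\<^sup>2 / t\<^sup>2)) \<partial>M)
      \<le> (\<integral>\<^sup>+ \<omega>. ennreal (1/3) * ennreal (exp ((norm (X \<omega>))\<^sup>2 / s\<^sup>2))
          + ennreal (2/(3*d)) * (\<Sum>i\<in>UNIV. ennreal (exp ((Z \<omega> $ i)\<^sup>2 / 4))) \<partial>M)"
      by (rule nn_integral_mono) (rule pw)
    also have "\<dots> = ennreal (1/3) * (\<integral>\<^sup>+ \<omega>. ennreal (exp ((norm (X \<omega>))\<^sup>2 / s\<^sup>2)) \<partial>M)
          + ennreal (2/(3*d)) * (\<Sum>i\<in>UNIV. (\<integral>\<^sup>+ \<omega>. ennreal (exp ((Z \<omega> $ i)\<^sup>2 / 4)) \<partial>M))"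
      using assms(2) Zim
      by (simp add: nn_integral_add nn_integral_cmult nn_integral_sum del: sum_ennreal)
    also have "\<dots> = ennreal (1/3) * (\<integral>\<^sup>+ \<omega>. ennreal (exp ((norm (X \<omega>))\<^sup>2 / s\<^sup>2)) \<partial>M)
          + ennreal (2/(3*d)) * (of_nat CARD('d) * ennreal (sqrt 2))"
      by (simp add: gauss_mgf[OF Zi])
    also have "\<dots> \<le> ennreal (1/3) * 2 + ennreal (2/(3*d)) * (of_nat CARD('d) * ennreal (sqrt 2))"
      by (intro add_mono mult_left_mono sX) auto
    also have "\<dots> = ennreal (2/3 + 2/3 * sqrt 2)"
      using d0 by (simp add: d_def ennreal_plus ennreal_mult ennreal_of_nat_eq_real_of_nat
          flip: ennreal_plus ennreal_mult ennreal_numeral)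
    also have "\<dots> \<le> 2"
    proof -
      have "sqrt 2 \<le> (2::real)" using real_sqrt_le_mono[of 2 4] by simp
      then have "2/3 + 2/3 * sqrt 2 \<le> (2::real)" by simp
      then show ?thesis by (metis ennreal_leI ennreal_numeral)
    qed
    finally show ?thesis using t0 by (simp add: SY_def)
  qed
  have "Inf SY \<le> 3 * sd"
  proof (rule dense_ge)
    fix t assume "3 * sd < t"
    then show "Inf SY \<le> t"
      using main by (intro cInf_lower) (auto simp: SY_def bdd_below_def intro!: exI[of _ 0])
  qed
  then show ?thesis by (simp add: psi2_norm_def SY_def sd_def d_def)
qed

end
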